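(* Consider the Markov-chain trace semantics of an APPL program $\langle\mathcal{D},S_{\mathsf{main}}\rangle$ with stopping time $T$, fix $m\in\mathbb{N}$, and let $\psi:\Sigma\to\mathcal{M}_{\mathcal{R}}^{(m)}$ be an expected-potential function for upper bounds on stopping time, where $\mathcal{R}=([0,\infty],\le,+,\cdot,0,1)$. Let $A_n(\omega)=\langle n^k\rangle_{0\le k\le m}$, $A_T(\omega)=A_{T(\omega)}(\omega)=\langle T(\omega)^k\rangle_{0\le k\le m}$ and $\Psi_0(\omega)=\psi(\omega_0)$. Then $\mathbb{E}[A_T]\sqsubseteq\mathbb{E}[\Psi_0]$.
   Context: APPL: fix finite sets $\mathsf{VID}$ (real-valued program variables) and $\mathsf{FID}$. Expressions $E::=x\mid c\mid E_1+E_2\mid E_1*E_2$; conditions $L::=\mathsf{true}\mid\neg L\mid L_1\wedge L_2\mid E_1\le E_2$; distributions $D$ with probability measures $\mu_D$ on $\mathbb{R}$; statements $S::=\mathsf{skip}\mid\mathsf{tick}(c)\mid x:=E\mid x\sim D\mid\mathsf{call}\ f\mid\mathsf{while}\ L\ \mathsf{do}\ S\mid\mathsf{if}\ \mathsf{prob}(p)\ \mathsf{then}\ S_1\ \mathsf{else}\ S_2\mid\mathsf{if}\ L\ \mathsf{then}\ S_1\ \mathsf{else}\ S_2\mid S_1;S_2$; program $\langle\mathcal{D},S_{\mathsf{main}}\rangle$ with $\mathcal{D}:\mathsf{FID}\to$ statements. Continuations $K::=\mathsf{Kstop}\mid\mathsf{Kloop}(L,S,K)\mid\mathsf{Kseq}(S,K)$.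 Configurations $\sigma=\langle\gamma,S,K,\alpha\rangle$, $\gamma:\mathsf{VID}\to\mathbb{R}$, $\alpha\in\mathbb{R}$; $\Sigma$ the measurable space of configurations. One-step kernel $\mapsto$: $\langle\gamma,\mathsf{skip},\mathsf{Kstop},\alpha\rangle\mapsto\delta(\text{itself})$; $\langle\gamma,\mathsf{skip},\mathsf{Kloop}(L,S,K),\alpha\rangle\mapsto\delta(\langle\gamma,S,\mathsf{Kloop}(L,S,K),\alpha\rangle)$ if $\gamma(L)$ true else $\delta(\langle\gamma,\mathsf{skip},K,\alpha\rangle)$; $\langle\gamma,\mathsf{skip},\mathsf{Kseq}(S,K),\alpha\rangle\mapsto\delta(\langle\gamma,S,K,\alpha\rangle)$; $\mathsf{tick}(c)$: $\delta(\langle\gamma,\mathsf{skip},K,\alpha+c\rangle)$; $x:=E$: $\delta(\langle\gamma[x\mapsto\gamma(E)],\mathsf{skip},K,\alpha\rangle)$; $x\sim D$: law of $\langle\gamma[x\mapsto r],\mathsf{skip},K,\alpha\rangle$, $r\sim\mu_D$; $\mathsf{call}\ f$: $\delta(\langle\gamma,\mathcal{D}(f),K,\alpha\rangle)$; probabilistic branch: $p\,\delta(\langle\gamma,S_1,K,\alpha\rangle)+(1-p)\,\delta(\langle\gamma,S_2,K,\alpha\rangle)$; conditional according to $\gamma(L)$; $\mathsf{while}\ L\ \mathsf{do}\ S$: $\delta(\langle\gamma,\mathsf{skip},\mathsf{Kloop}(L,S,K),\alpha\rangle)$; $S_1;S_2$: $\delta(\langle\gamma,S_1,\mathsf{Kseq}(S_2,K),\alpha\rangle)$.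 $\Omega=\Sigma^{\mathbb{Z}_{\ge0}}$ with $\mathbb{P}$ the law of the Markov chain started at $\langle\lambda\_.0,S_{\mathsf{main}},\mathsf{Kstop},0\rangle$ with kernel $\mapsto$; $T(\omega)=\inf\{n:\omega_n=\langle\_,\mathsf{skip},\mathsf{Kstop},\_\rangle\}\in\mathbb{Z}_{\ge0}\cup\{\infty\}$. $\mathcal{M}_{\mathcal{R}}^{(m)}$ is the set of vectors $\langle u_k\rangle_{0\le k\le m}$ over $[0,\infty]$ with pointwise $\oplus$, $\langle u_k\rangle\otimes\langle v_k\rangle=\langle\sum_{i=0}^k\binom{k}{i}u_iv_{k-i}\rangle_{0\le k\le m}$, $\underline{1}=\langle1,0,\dots,0\rangle$, and pointwise order $\sqsubseteq$; expectations are componentwise. A (measurable) map $\psi:\Sigma\to\mathcal{M}_{\mathcal{R}}^{(m)}$ is an expected-potential function for upper bounds on stopping time if (i) $\psi(\sigma)_0=1$ for all $\sigma$, (ii) $\psi(\sigma)=\underline{1}$ if $\sigma=\langle\_,\mathsf{skip},\mathsf{Kstop},\_\rangle$, and (iii) $\psi(\sigma)\sqsupseteq\mathbb{E}_{\sigma'\sim{\mapsto}(\sigma)}[\langle1,1,\dots,1\rangle\otimes\psi(\sigma')]$ for every non-terminating configuration $\sigma$. *)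

theory Defs
  imports "HOL-Probability.Probability"
begin

typedef dist = "{M :: real measure. prob_space M \<and> sets M = sets borel}"
  by (intro exI[of _ "return borel 0"]) (auto simp: prob_space_return)

typedef prob = "{p :: real. 0 \<le> p \<and> p \<le> 1}"
  by (intro exI[of _ 0]) auto

datatype 'v expr = EVar 'v | EConst real | EAdd "'v expr" "'v expr" | EMul "'v expr" "'v expr"

datatype 'v cond = CTrue | CNot "'v cond" | CAnd "'v cond" "'v cond" | CLe "'v expr" "'v expr"

datatype ('v, 'f) stmt =
    Skip
  | Tick real
  | Assign 'v "'v expr"
  | Sample 'v dist
  | Call 'f
  | While "'v cond" "('v, 'f) stmt"
  | PIf prob "('v, 'f) stmt" "('v, 'f) stmt"
  | If "'v cond" "('v, 'f) stmt" "('v, 'f) stmt"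
  | Seq "('v, 'f) stmt" "('v, 'f) stmt"

datatype ('v, 'f) cont =
    Kstop
  | Kloop "'v cond" "('v, 'f) stmt" "('v, 'f) cont"
  | Kseq "('v, 'f) stmt" "('v, 'f) cont"

fun eval_expr :: "('v \<Rightarrow> real) \<Rightarrow> 'v expr \<Rightarrow> real" where
  "eval_expr \<gamma> (EVar x) = \<gamma> x"
| "eval_expr \<gamma> (EConst c) = c"
| "eval_expr \<gamma> (EAdd e1 e2) = eval_expr \<gamma> e1 + eval_expr \<gamma> e2"
| "eval_expr \<gamma> (EMul e1 e2) = eval_expr \<gamma> e1 * eval_expr \<gamma> e2"

fun eval_cond :: "('v \<Rightarrow> real) \<Rightarrow> 'v cond \<Rightarrow> bool" where
  "eval_cond \<gamma> CTrue = True"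
| "eval_cond \<gamma> (CNot L) = (\<not> eval_cond \<gamma> L)"
| "eval_cond \<gamma> (CAnd L1 L2) = (eval_cond \<gamma> L1 \<and> eval_cond \<gamma> L2)"
| "eval_cond \<gamma> (CLe e1 e2) = (eval_expr \<gamma> e1 \<le> eval_expr \<gamma> e2)"

type_synonym ('v, 'f) conf = "('v \<Rightarrow> real) \<times> ('v, 'f) stmt \<times> ('v, 'f) cont \<times> real"

definition conf_M :: "('v::finite, 'f) conf measure" where
  "conf_M = (PiM UNIV (\<lambda>_. borel)) \<Otimes>\<^sub>M (count_space UNIV \<Otimes>\<^sub>M (count_space UNIV \<Otimes>\<^sub>M borel))"

fun step :: "('f \<Rightarrow> ('v::finite, 'f) stmt) \<Rightarrow> ('v, 'f) conf \<Rightarrow> ('v, 'f) conf measure" where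
  "step Dm (\<gamma>, Skip, Kstop, \<alpha>) = return conf_M (\<gamma>, Skip, Kstop, \<alpha>)"
| "step Dm (\<gamma>, Skip, Kloop L S K, \<alpha>) =
     return conf_M (if eval_cond \<gamma> L then (\<gamma>, S, Kloop L S K, \<alpha>) else (\<gamma>, Skip, K, \<alpha>))"
| "step Dm (\<gamma>, Skip, Kseq S K, \<alpha>) = return conf_M (\<gamma>, S, K, \<alpha>)"
| "step Dm (\<gamma>, Tick c, K, \<alpha>) = return conf_M (\<gamma>, Skip, K, \<alpha> + c)"
| "step Dm (\<gamma>, Assign x e, K, \<alpha>) = return conf_M (\<gamma>(x := eval_expr \<gamma> e), Skip, K, \<alpha>)"
| "step Dm (\<gamma>, Sample x D, K, \<alpha>) = distr (Rep_dist D) conf_M (\<lambda>r. (\<gamma>(x := r), Skip, K, \<alpha>))"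
| "step Dm (\<gamma>, Call f, K, \<alpha>) = return conf_M (\<gamma>, Dm f, K, \<alpha>)"
| "step Dm (\<gamma>, PIf p S1 S2, K, \<alpha>) =
     distr (measure_pmf (bernoulli_pmf (Rep_prob p))) conf_M
       (\<lambda>b. if b then (\<gamma>, S1, K, \<alpha>) else (\<gamma>, S2, K, \<alpha>))"
| "step Dm (\<gamma>, If L S1 S2, K, \<alpha>) =
     return conf_M (if eval_cond \<gamma> L then (\<gamma>, S1, K, \<alpha>) else (\<gamma>, S2, K, \<alpha>))"
| "step Dm (\<gamma>, While L S, K, \<alpha>) = return conf_M (\<gamma>, Skip, Kloop L S K, \<alpha>)"
| "step Dm (\<gamma>, Seq S1 S2, K, \<alpha>) = return conf_M (\<gamma>, S1, Kseq S2 K, \<alpha>)"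

definition is_term :: "('v, 'f) conf \<Rightarrow> bool" where
  "is_term \<sigma> \<longleftrightarrow> fst (snd \<sigma>) = Skip \<and> fst (snd (snd \<sigma>)) = Kstop"

definition init_conf :: "('v, 'f) stmt \<Rightarrow> ('v, 'f) conf" where
  "init_conf Smain = ((\<lambda>_. 0), Smain, Kstop, 0)"

text \<open>Probability that the chain started at \<open>\<sigma>\<close> has \<open>\<omega>\<^sub>i \<in> As!i\<close> for all \<open>i < length As\<close>.\<close>
fun path_prob :: "('c \<Rightarrow> 'c measure) \<Rightarrow> 'c \<Rightarrow> 'c set list \<Rightarrow> ennreal" where
  "path_prob Kn \<sigma> [] = 1"
| "path_prob Kn \<sigma> (A # As) = indicator A \<sigma> * (\<integral>\<^sup>+ \<sigma>'. path_prob Kn \<sigma>' As \<partial>(Kn \<sigma>))"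

definition markov_law :: "'c measure \<Rightarrow> ('c \<Rightarrow> 'c measure) \<Rightarrow> 'c \<Rightarrow> 'c stream measure \<Rightarrow> bool" where
  "markov_law M Kn \<sigma>0 P \<longleftrightarrow>
     prob_space P \<and> sets P = sets (stream_space M) \<and>
     (\<forall>As. set As \<subseteq> sets M \<longrightarrow>
        emeasure P {\<omega> \<in> space (stream_space M). \<forall>i < length As. \<omega> !! i \<in> As ! i}
          = path_prob Kn \<sigma>0 As)"

definition stop_time :: "('v, 'f) conf stream \<Rightarrow> enat" where
  "stop_time \<omega> = (if \<exists>n. is_term (\<omega> !! n) then enat (LEAST n. is_term (\<omega> !! n)) else \<infinity>)"

text \<open>Vectors \<open>\<langle>u_k\<rangle>_{0\<le>k\<le>m}\<close> are represented as \<open>nat \<Rightarrow> ennreal\<close>; only indices \<open>k \<le> m\<close> matter.\<close>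
definition mom_mult :: "(nat \<Rightarrow> ennreal) \<Rightarrow> (nat \<Rightarrow> ennreal) \<Rightarrow> nat \<Rightarrow> ennreal" where
  "mom_mult u v = (\<lambda>k. \<Sum>i\<le>k. of_nat (k choose i) * u i * v (k - i))"

definition mom_one :: "nat \<Rightarrow> ennreal" where
  "mom_one = (\<lambda>k. if k = 0 then 1 else 0)"

definition mom_le :: "nat \<Rightarrow> (nat \<Rightarrow> ennreal) \<Rightarrow> (nat \<Rightarrow> ennreal) \<Rightarrow> bool" where
  "mom_le m u v \<longleftrightarrow> (\<forall>k\<le>m. u k \<le> v k)"

definition mom_expect :: "'c measure \<Rightarrow> ('c \<Rightarrow> nat \<Rightarrow> ennreal) \<Rightarrow> nat \<Rightarrow> ennreal" where
  "mom_expect M f = (\<lambda>k. \<integral>\<^sup>+ x. f x k \<partial>M)"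

definition epf_upper ::
  "('f \<Rightarrow> ('v::finite, 'f) stmt) \<Rightarrow> nat \<Rightarrow> (('v, 'f) conf \<Rightarrow> nat \<Rightarrow> ennreal) \<Rightarrow> bool" where
  "epf_upper Dm m \<psi> \<longleftrightarrow>
     (\<forall>k\<le>m. (\<lambda>\<sigma>. \<psi> \<sigma> k) \<in> borel_measurable conf_M) \<and>
     (\<forall>\<sigma>. \<psi> \<sigma> 0 = 1) \<and>
     (\<forall>\<sigma>. is_term \<sigma> \<longrightarrow> (\<forall>k\<le>m. \<psi> \<sigma> k = mom_one k)) \<and>
     (\<forall>\<sigma>. \<not> is_term \<sigma> \<longrightarrow>
        mom_le m (mom_expect (step Dm \<sigma>) (\<lambda>\<sigma>'. mom_mult (\<lambda>_. 1) (\<psi> \<sigma>'))) (\<psi> \<sigma>))"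

end

theory Submission
  imports Defs
begin

lemma nn_integral_add_le:
  "integral\<^sup>N M f + integral\<^sup>N M g \<le> (\<integral>\<^sup>+x. f x + g x \<partial>M)"
proof -
  have ne: "{s. simple_function M s \<and> s \<le> h} \<noteq> {}" for h :: "_ \<Rightarrow> ennreal"
  proof -
    have "(\<lambda>_. 0) \<in> {s. simple_function M s \<and> s \<le> h}" by (auto simp: le_fun_def)
    then show ?thesis by blast
  qed
  show ?thesis
    unfolding nn_integral_def
    apply (subst ennreal_SUP_add_left[symmetric, OF ne])
    apply (rule SUP_least)
    apply (subst ennreal_SUP_add_right[OF ne])
    apply (rule SUP_least)
    apply clarify
    subgoal for s t
    proof -
      assume a: "simple_function M s" "s \<le> f" "simple_function M t" "t \<le> g"
      have "integral\<^sup>S M s + integral\<^sup>S M t = integral\<^sup>S M (\<lambda>x. s x + t x)"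
        using simple_integral_add[of M s t] a by simp
      also have "\<dots> \<le> (SUP u\<in>{u. simple_function M u \<and> u \<le> (\<lambda>x. f x + g x)}. integral\<^sup>S M u)"
        using a by (intro SUP_upper) (auto simp: le_fun_def intro: add_mono)
      finally show ?thesis .
    qed
    done
qed

lemma nn_integral_cmult_le:
  "c * integral\<^sup>N M f \<le> (\<integral>\<^sup>+x. c * f x \<partial>M)"
  unfolding nn_integral_def SUP_mult_left_ennreal
  apply (rule SUP_least)
  apply clarify
  subgoal for s
    apply (subst simple_integral_mult[symmetric], assumption)
    apply (rule SUP_upper)
    apply (auto simp: le_fun_def intro!: mult_left_mono)
    done
  done

lemma nn_integral_sum_le:
  assumes "finite I"
  shows "(\<Sum>i\<in>I. integral\<^sup>N M (f i)) \<le> (\<integral>\<^sup>+x. (\<Sum>i\<in>I. f i x) \<partial>M)"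
  using assms
proof (induction I rule: finite_induct)
  case empty then show ?case by simp
next
  case (insert a I)
  have "(\<Sum>i\<in>insert a I. integral\<^sup>N M (f i)) = integral\<^sup>N M (f a) + (\<Sum>i\<in>I. integral\<^sup>N M (f i))"
    using insert by simp
  also have "\<dots> \<le> integral\<^sup>N M (f a) + (\<integral>\<^sup>+x. (\<Sum>i\<in>I. f i x) \<partial>M)"
    using insert by (intro add_left_mono)
  also have "\<dots> \<le> (\<integral>\<^sup>+x. f a x + (\<Sum>i\<in>I. f i x) \<partial>M)"
    by (rule nn_integral_add_le)
  also have "\<dots> = (\<integral>\<^sup>+x. (\<Sum>i\<in>insert a I. f i x) \<partial>M)"
    using insert by simp
  finally show ?case .
qed

definition dd :: "nat \<Rightarrow> nat \<Rightarrow> nat" where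
  "dd r k = r ^ k - (r - 1) ^ k"

lemma dd0[simp]: "dd 0 k = 0"
  by (cases k) (auto simp: dd_def)

lemma dd1: "dd 1 k + (if k = 0 then 1 else 0) = 1"
  by (cases k) (auto simp: dd_def)

lemma dd_binom:
  assumes "r \<ge> 1"
  shows "(\<Sum>i\<le>k. (k choose i) * dd r (k - i)) = dd (r + 1) k"
proof -
  have le: "(r - 1) ^ j \<le> r ^ j" for j by (intro power_mono) auto
  have "(\<Sum>i\<le>k. (k choose i) * dd r (k - i)) =
        (\<Sum>i\<le>k. (k choose i) * r ^ (k - i) - (k choose i) * (r - 1) ^ (k - i))"
    by (simp add: dd_def diff_mult_distrib2)
  also have "\<dots> = (\<Sum>i\<le>k. (k choose i) * r ^ (k - i)) - (\<Sum>i\<le>k. (k choose i) * (r - 1) ^ (k - i))"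
    by (rule sum_subtractf_nat) (intro ballI mult_left_mono le zero_le)
  also have "(\<Sum>i\<le>k. (k choose i) * r ^ (k - i)) = (1 + r) ^ k"
    using binomial_ring[of 1 r k] by simp
  also have "(\<Sum>i\<le>k. (k choose i) * (r - 1) ^ (k - i)) = (1 + (r - 1)) ^ k"
    using binomial_ring[of 1 "r - 1" k] by simp
  finally show ?thesis using assms by (simp add: dd_def)
qed

lemma dd_telescope:
  assumes "k \<ge> 1"
  shows "(\<Sum>r\<le>t. dd r k) = t ^ k"
proof (induction t)
  case 0 then show ?case using assms by simp
next
  case (Suc t)
  have "t ^ k \<le> Suc t ^ k" by (intro power_mono) auto
  then show ?case using Suc by (simp add: dd_def)
qed

lemma space_conf_M[simp]: "space conf_M = UNIV"
  by (auto simp: conf_M_def space_pair_measure space_PiM)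

lemma prob_step': "prob_space (step Dm (\<gamma>, S, K, \<alpha>))"
  proof (cases S)
    case Skip then show ?thesis by (cases K) (auto intro: prob_space_return)
  next
    case (Sample x D)
    have D: "prob_space (Rep_dist D)" "sets (Rep_dist D) = sets borel"
      using Rep_dist[of D] by auto
    have m: "(\<lambda>r. (\<gamma>(x := r), Skip, K, \<alpha>)) \<in> measurable (Rep_dist D) conf_M"
      unfolding measurable_cong_sets[OF D(2) refl] conf_M_def
      apply (rule measurable_Pair)
      subgoal by (rule measurable_PiM_single') (auto simp: space_PiM)
      subgoal by (rule measurable_const) (auto simp: space_pair_measure)
      done
    show ?thesis using Sample D m by (auto intro!: prob_space.prob_space_distr)
  next
    case (PIf p S1 S2)
    then show ?thesis
      by (auto intro!: prob_space.prob_space_distr prob_space_measure_pmf)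
  qed (auto intro: prob_space_return)

lemma prob_step: "prob_space (step Dm \<sigma>)"
  using prob_step'[of Dm "fst \<sigma>" "fst (snd \<sigma>)" "fst (snd (snd \<sigma>))" "snd (snd (snd \<sigma>))"] by simp

lemma step_space: "emeasure (step Dm \<sigma>) (space (step Dm \<sigma>)) = 1"
  using prob_space.emeasure_space_1[OF prob_step] .

definition NT :: "('v, 'f) conf set" where "NT = {\<sigma>. \<not> is_term \<sigma>}"

lemma NT_sets: "NT \<in> sets (conf_M :: ('v::finite, 'f) conf measure)"
proof -
  have "NT = space conf_M - (space (PiM UNIV (\<lambda>_. borel)) \<times> ({Skip} \<times> ({Kstop} \<times> space borel)))"
    by (auto simp: NT_def is_term_def space_PiM)
  also have "\<dots> \<in> sets conf_M"
    unfolding conf_M_def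
    by (intro sets.compl_sets pair_measureI) auto
  finally show ?thesis .
qed

definition pp where "pp Dm \<sigma> r = path_prob (step Dm) \<sigma> (replicate r NT)"

lemma pp_0[simp]: "pp Dm \<sigma> 0 = 1" by (simp add: pp_def)
lemma pp_Suc: "pp Dm \<sigma> (Suc r) = indicator NT \<sigma> * (\<integral>\<^sup>+ \<sigma>'. pp Dm \<sigma>' r \<partial>step Dm \<sigma>)"
  by (simp add: pp_def)

definition LL where "LL Dm n \<sigma> k = mom_one k + (\<Sum>r\<le>n. of_nat (dd r k) * pp Dm \<sigma> r)"

lemma key_identity:
  fixes p :: "nat \<Rightarrow> ennreal"
  assumes p0: "p 0 = 1"
  shows "mom_one k + (\<Sum>r\<le>n. of_nat (dd (Suc r) k) * p r) =
    (\<Sum>i\<le>k. of_nat (k choose i) * 1 * (mom_one (k - i) + (\<Sum>r\<le>n. of_nat (dd r (k - i)) * p r)))"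
proof -
  define e where "e r = (\<Sum>i\<le>k. (k choose i) * dd r (k - i))" for r
  have "(\<Sum>i\<le>k. of_nat (k choose i) * 1 * (mom_one (k - i) + (\<Sum>r\<le>n. of_nat (dd r (k - i)) * p r)))
      = (\<Sum>i\<le>k. of_nat (k choose i) * mom_one (k - i)) +
        (\<Sum>i\<le>k. \<Sum>r\<le>n. of_nat ((k choose i) * dd r (k - i)) * p r)"
    by (simp add: distrib_left sum.distrib sum_distrib_left mult.assoc)
  also have "(\<Sum>i\<le>k. of_nat (k choose i) * mom_one (k - i)) = (1::ennreal)"
  proof -
    have "(\<Sum>i\<le>k. of_nat (k choose i) * mom_one (k - i)) = (\<Sum>i\<le>k. if i = k then (1::ennreal) else 0)"
      by (intro sum.cong) (auto simp: mom_one_def)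
    then show ?thesis by simp
  qed
  also have "(\<Sum>i\<le>k. \<Sum>r\<le>n. of_nat ((k choose i) * dd r (k - i)) * p r) =
      (\<Sum>r\<le>n. of_nat (e r) * p r)"
    by (subst sum.swap) (simp add: e_def of_nat_sum sum_distrib_right)
  finally have R: "(\<Sum>i\<le>k. of_nat (k choose i) * 1 * (mom_one (k - i) + (\<Sum>r\<le>n. of_nat (dd r (k - i)) * p r)))
     = 1 + (\<Sum>r\<le>n. of_nat (e r) * p r)" .
  have tm: "of_nat (dd (Suc r) k) * p r + (if r = 0 then mom_one k else 0)
      = (if r = 0 then 1 else 0) + of_nat (e r) * p r" for r
  proof (cases "r = 0")
    case True
    have "e 0 = 0" by (simp add: e_def)
    moreover have "of_nat (dd 1 k) + mom_one k = (1::ennreal)"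
      using dd1[of k] unfolding mom_one_def
      by (cases "k = 0") (auto simp: dd_def)
    ultimately show ?thesis using True p0 by simp
  next
    case False
    then have "e r = dd (Suc r) k" using dd_binom[of r k] by (simp add: e_def)
    then show ?thesis using False by simp
  qed
  have "mom_one k + (\<Sum>r\<le>n. of_nat (dd (Suc r) k) * p r) =
      (\<Sum>r\<le>n. of_nat (dd (Suc r) k) * p r + (if r = 0 then mom_one k else 0))"
    by (simp add: sum.distrib add.commute)
  also have "\<dots> = (\<Sum>r\<le>n. (if r = 0 then 1 else 0) + of_nat (e r) * p r)"
    using tm by simp
  also have "\<dots> = 1 + (\<Sum>r\<le>n. of_nat (e r) * p r)"
    by (simp add: sum.distrib)
  finally show ?thesis using R by simp
qed

lemma LL_le:
  assumes epf: "epf_upper Dm m \<psi>"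
  shows "\<forall>\<sigma> k. k \<le> m \<longrightarrow> LL Dm n \<sigma> k \<le> \<psi> \<sigma> k"
proof (induction n)
  case 0
  show ?case
  proof (intro allI impI)
    fix \<sigma> k assume "k \<le> m"
    show "LL Dm 0 \<sigma> k \<le> \<psi> \<sigma> k"
    proof -
      have "\<psi> \<sigma> 0 = 1" using epf unfolding epf_upper_def by blast
      then show ?thesis by (cases "k = 0") (auto simp: LL_def mom_one_def)
    qed
  qed
next
  case (Suc n)
  show ?case
  proof (intro allI impI)
    fix \<sigma> k assume km: "k \<le> m"
    have LS: "LL Dm (Suc n) \<sigma> k = mom_one k + (\<Sum>r\<le>n. of_nat (dd (Suc r) k) * pp Dm \<sigma> (Suc r))"
      unfolding LL_def by (subst sum.atMost_Suc_shift) simp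
    show "LL Dm (Suc n) \<sigma> k \<le> \<psi> \<sigma> k"
    proof (cases "is_term \<sigma>")
      case True
      then have "pp Dm \<sigma> (Suc r) = 0" for r by (simp add: pp_Suc NT_def)
      moreover have "\<psi> \<sigma> k = mom_one k" using True epf km unfolding epf_upper_def by blast
      ultimately show ?thesis unfolding LS by simp
    next
      case False
      let ?M = "step Dm \<sigma>"
      have ppS: "pp Dm \<sigma> (Suc r) = (\<integral>\<^sup>+ \<sigma>'. pp Dm \<sigma>' r \<partial>?M)" for r
        using False by (simp add: pp_Suc NT_def)
      have "LL Dm (Suc n) \<sigma> k = (\<integral>\<^sup>+ \<sigma>'. mom_one k \<partial>?M) +
          (\<Sum>r\<le>n. of_nat (dd (Suc r) k) * (\<integral>\<^sup>+ \<sigma>'. pp Dm \<sigma>' r \<partial>?M))"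
        unfolding LS ppS using step_space[of Dm \<sigma>] by simp
      also have "\<dots> \<le> (\<integral>\<^sup>+ \<sigma>'. mom_one k \<partial>?M) +
          (\<Sum>r\<le>n. (\<integral>\<^sup>+ \<sigma>'. of_nat (dd (Suc r) k) * pp Dm \<sigma>' r \<partial>?M))"
        by (intro add_left_mono sum_mono nn_integral_cmult_le)
      also have "\<dots> \<le> (\<integral>\<^sup>+ \<sigma>'. mom_one k \<partial>?M) +
          (\<integral>\<^sup>+ \<sigma>'. (\<Sum>r\<le>n. of_nat (dd (Suc r) k) * pp Dm \<sigma>' r) \<partial>?M)"
        by (intro add_left_mono nn_integral_sum_le) simp
      also have "\<dots> \<le> (\<integral>\<^sup>+ \<sigma>'. mom_one k + (\<Sum>r\<le>n. of_nat (dd (Suc r) k) * pp Dm \<sigma>' r) \<partial>?M)"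
        by (rule nn_integral_add_le)
      also have "\<dots> = (\<integral>\<^sup>+ \<sigma>'. (\<Sum>i\<le>k. of_nat (k choose i) * 1 * LL Dm n \<sigma>' (k - i)) \<partial>?M)"
        unfolding LL_def by (subst key_identity) simp_all
      also have "\<dots> \<le> (\<integral>\<^sup>+ \<sigma>'. mom_mult (\<lambda>_. 1) (\<psi> \<sigma>') k \<partial>?M)"
        unfolding mom_mult_def
        using Suc.IH km
        by (intro nn_integral_mono sum_mono mult_left_mono) auto
      also have "\<dots> \<le> \<psi> \<sigma> k"
      proof -
        have "mom_le m (mom_expect (step Dm \<sigma>) (\<lambda>\<sigma>'. mom_mult (\<lambda>_. 1) (\<psi> \<sigma>'))) (\<psi> \<sigma>)"
          using epf False unfolding epf_upper_def by blast
        then show ?thesis using km unfolding mom_le_def mom_expect_def by blast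
      qed
      finally show ?thesis .
    qed
  qed
qed

lemma LL_partial:
  "(\<Sum>r<Suc n. of_nat (dd r k) * pp Dm \<sigma> r) \<le> LL Dm n \<sigma> k"
  unfolding LL_def lessThan_Suc_atMost by simp

lemma stop_time_ge:
  "enat r \<le> stop_time \<omega> \<longleftrightarrow> (\<forall>i<r. \<not> is_term (\<omega> !! i))"
proof (cases "\<exists>n. is_term (\<omega> !! n)")
  case True
  let ?t = "LEAST n. is_term (\<omega> !! n)"
  have st: "stop_time \<omega> = enat ?t" using True by (simp add: stop_time_def)
  have "is_term (\<omega> !! ?t)" using True by (rule LeastI_ex)
  moreover have "i < ?t \<Longrightarrow> \<not> is_term (\<omega> !! i)" for i by (rule not_less_Least)
  ultimately show ?thesis unfolding st by (auto simp: not_le) (meson not_le)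
next
  case False
  then show ?thesis by (simp add: stop_time_def)
qed

theorem theoremG2:
  fixes Dm :: "'f::finite \<Rightarrow> ('v::finite, 'f) stmt"
    and Smain :: "('v, 'f) stmt"
    and m :: nat
    and \<psi> :: "('v, 'f) conf \<Rightarrow> nat \<Rightarrow> ennreal"
    and P :: "('v, 'f) conf stream measure"
  assumes "epf_upper Dm m \<psi>"
    and "markov_law conf_M (step Dm) (init_conf Smain) P"
  shows "mom_le m
           (\<lambda>k. \<integral>\<^sup>+ \<omega>. (ennreal_of_enat (stop_time \<omega>)) ^ k \<partial>P)
           (\<lambda>k. \<integral>\<^sup>+ \<omega>. \<psi> (shd \<omega>) k \<partial>P)"
proof -
  note epf = assms(1)
  let ?S = "stream_space (conf_M :: ('v, 'f) conf measure)"
  let ?s0 = "init_conf Smain :: ('v, 'f) conf"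
  have PP: "prob_space P" and sP: "sets P = sets ?S"
    and cyl: "\<And>As. set As \<subseteq> sets conf_M \<Longrightarrow>
        emeasure P {\<omega> \<in> space ?S. \<forall>i < length As. \<omega> !! i \<in> As ! i} = path_prob (step Dm) ?s0 As"
    using assms(2) unfolding markov_law_def by auto
  have spP: "space P = space ?S" using sP by (rule sets_eq_imp_space_eq)
  interpret P: prob_space P by (rule PP)
  define A where "A r = {\<omega> \<in> space ?S. \<forall>i < length (replicate r NT). \<omega> !! i \<in> replicate r NT ! i}" for r
  have A_meas: "A r \<in> sets P" for r
  proof -
    have "A r = space ?S - (\<Union>i\<in>{..<r}. space ?S - (\<lambda>\<omega>. \<omega> !! i) -` NT \<inter> space ?S)"
      by (auto simp: A_def)
    also have "\<dots> \<in> sets ?S"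
      using NT_sets by (intro sets.Diff sets.top sets.finite_UN) (auto intro!: measurable_sets[OF measurable_snth])
    finally show ?thesis using sP by simp
  qed
  have A_em: "emeasure P (A r) = pp Dm ?s0 r" for r
      proof -
    have "set (replicate r NT) \<subseteq> sets (conf_M :: ('v, 'f) conf measure)" using NT_sets by (cases r) auto
    then show ?thesis unfolding A_def pp_def using cyl[of "replicate r NT"] by simp
  qed
  have A_ind: "\<omega> \<in> space P \<Longrightarrow> indicator (A r) \<omega> = (if enat r \<le> stop_time \<omega> then 1 else 0 :: ennreal)" for \<omega> r
    unfolding stop_time_ge spP by (auto simp: A_def NT_def split: split_indicator)
  define B where "B = {\<omega> \<in> space ?S. \<forall>i < length [{?s0}]. \<omega> !! i \<in> [{?s0}] ! i}"
  have s0_sets: "{?s0} \<in> sets conf_M"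
  proof -
    have "{?s0} = PiE UNIV (\<lambda>_. {0}) \<times> ({Smain} \<times> ({Kstop} \<times> {0}))"
      by (auto simp: init_conf_def PiE_iff fun_eq_iff)
    also have "\<dots> \<in> sets conf_M"
      unfolding conf_M_def by (intro pair_measureI sets_PiM_I_finite) auto
    finally show ?thesis .
  qed
  have B_em: "emeasure P B = 1"
    unfolding B_def using cyl[of "[{?s0}]"] s0_sets step_space by simp
  have B_meas: "B \<in> sets P"
  proof -
    have "B = (\<lambda>\<omega>. \<omega> !! 0) -` {?s0} \<inter> space ?S" by (auto simp: B_def)
    also have "\<dots> \<in> sets ?S" using s0_sets by (auto intro!: measurable_sets[OF measurable_snth])
    finally show ?thesis using sP by simp
  qed
  have RHS: "\<psi> ?s0 k \<le> (\<integral>\<^sup>+ \<omega>. \<psi> (shd \<omega>) k \<partial>P)" for k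
  proof -
    have "\<psi> ?s0 k = (\<integral>\<^sup>+ \<omega>. \<psi> ?s0 k * indicator B \<omega> \<partial>P)"
      using B_meas B_em by (simp add: nn_integral_cmult_indicator)
    also have "\<dots> \<le> (\<integral>\<^sup>+ \<omega>. \<psi> (shd \<omega>) k \<partial>P)"
      by (intro nn_integral_mono) (auto simp: B_def split: split_indicator)
    finally show ?thesis .
  qed
  have LHS: "(\<integral>\<^sup>+ \<omega>. (ennreal_of_enat (stop_time \<omega>)) ^ k \<partial>P) \<le> \<psi> ?s0 k" if km: "k \<le> m" for k
  proof (cases "k = 0")
    case True
    have "\<psi> ?s0 0 = 1" using epf unfolding epf_upper_def by blast
    then show ?thesis using True P.emeasure_space_1 by simp
  next
    case False
    then have k1: "k \<ge> 1" by simp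
    have pw: "(ennreal_of_enat (stop_time \<omega>)) ^ k \<le> (\<Sum>r. of_nat (dd r k) * indicator (A r) \<omega>)"
      if w: "\<omega> \<in> space P" for \<omega>
    proof -
      let ?f = "\<lambda>r. of_nat (dd r k) * indicator (A r) \<omega> :: ennreal"
      have bound: "of_nat (N ^ k) \<le> suminf ?f" if N: "enat N \<le> stop_time \<omega>" for N
      proof -
        have "of_nat (N ^ k) = (\<Sum>r\<le>N. of_nat (dd r k) :: ennreal)"
          using dd_telescope[OF k1, of N] by (metis of_nat_sum)
        also have "\<dots> = sum ?f {..N}"
        proof (intro sum.cong refl)
          fix r assume "r \<in> {..N}"
          then have "enat r \<le> stop_time \<omega>" using N by (meson atMost_iff enat_ord_simps(1) order_trans)
          then show "of_nat (dd r k) = ?f r" using w by (simp add: A_ind)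
        qed
        also have "\<dots> \<le> suminf ?f"
          by (intro sum_le_suminf) auto
        finally show ?thesis .
      qed
      show ?thesis
      proof (cases "stop_time \<omega>")
        case (enat t)
        then show ?thesis using bound[of t] by (simp add: of_nat_power)
      next
        case infinity
        have "(SUP N. of_nat N :: ennreal) \<le> suminf ?f"
        proof (rule SUP_least)
          fix N :: nat
          have "N \<le> N ^ k" using k1 by (cases N) (auto intro: self_le_power)
          then have "of_nat N \<le> (of_nat (N ^ k) :: ennreal)" by (simp only: of_nat_le_iff)
          also have "\<dots> \<le> suminf ?f" using bound[of N] infinity by simp
          finally show "of_nat N \<le> suminf ?f" .
        qed
        then show ?thesis using infinity k1
          by (simp add: ennreal_SUP_of_nat_eq_top top_unique)
      qed
    qed
    have "(\<integral>\<^sup>+ \<omega>. (ennreal_of_enat (stop_time \<omega>)) ^ k \<partial>P)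
        \<le> (\<integral>\<^sup>+ \<omega>. (\<Sum>r. of_nat (dd r k) * indicator (A r) \<omega>) \<partial>P)"
      by (intro nn_integral_mono pw)
    also have "\<dots> = (\<Sum>r. (\<integral>\<^sup>+ \<omega>. of_nat (dd r k) * indicator (A r) \<omega> \<partial>P))"
      using A_meas by (intro nn_integral_suminf) auto
    also have "\<dots> = (\<Sum>r. of_nat (dd r k) * pp Dm ?s0 r)"
      using A_meas A_em by (simp add: nn_integral_cmult_indicator)
    also have "\<dots> \<le> \<psi> ?s0 k"
    proof (rule suminf_le_const)
      fix n
      show "(\<Sum>r<n. of_nat (dd r k) * pp Dm ?s0 r) \<le> \<psi> ?s0 k"
      proof (cases n)
        case 0 then show ?thesis by simp
      next
        case (Suc n')
        have "LL Dm n' ?s0 k \<le> \<psi> ?s0 k" using LL_le[OF epf] km by blast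
        then show ?thesis unfolding Suc by (rule order_trans[OF LL_partial])
      qed
    qed auto
    finally show ?thesis .
  qed
  show ?thesis
    unfolding mom_le_def using LHS RHS by (blast intro: order_trans)
qed

end
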